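(* Let $f:\Delta^{m-1}\times\Delta^{n-1}\to\mathbb{R}$ be continuous, and define $g:\Delta^{m-1}\times\Delta^{n-1}\to\mathbb{R}$ by $$g(x,y)=\sup\Big\{\mathbb{E}_{X\sim p}f(X,y)\ :\ p\in\mathcal{P}(\Delta^{m-1}),\ \mathbb{E}_{X\sim p}X=x\Big\}.$$ Then $g$ is continuous on $\Delta^{m-1}\times\Delta^{n-1}$.
   Context: $\Delta^{k-1}=\{z\in\mathbb{R}^k: z_j\ge0,\sum_j z_j=1\}$ is the standard simplex with its usual topology, and $\Delta^{m-1}\times\Delta^{n-1}$ has the product topology. $\mathcal{P}(\Delta^{m-1})$ is the space of Borel probability measures on $\Delta^{m-1}$ with the topology of weak convergence; $\mathbb{E}_{X\sim p}X$ is the (vector-valued) mean of $p$. *)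

theory Defs
  imports "HOL-Probability.Probability"
begin

definition std_simplex :: "(real ^ 'k) set" where
  "std_simplex = {z. (\<forall>j. 0 \<le> z $ j) \<and> (\<Sum>j\<in>UNIV. z $ j) = 1}"

definition prob_measures_on :: "'a::topological_space set \<Rightarrow> 'a measure set" where
  "prob_measures_on S = {p. prob_space p \<and> space p = S \<and> sets p = sets (restrict_space borel S)}"

definition concav_env ::
  "((real ^ 'm) \<times> (real ^ 'n) \<Rightarrow> real) \<Rightarrow> (real ^ 'm) \<times> (real ^ 'n) \<Rightarrow> real" where
  "concav_env f = (\<lambda>(x, y). Sup {(\<integral>X. f (X, y) \<partial>p) | p.
       p \<in> prob_measures_on std_simplex \<and> (\<integral>X. X \<partial>p) = x})"

end

theory Submission
  imports Defs
begin

lemma simplex_compact: "compact (std_simplex :: (real^'k) set)"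
proof -
  have cl: "closed (std_simplex :: (real^'k) set)"
  proof -
    have "std_simplex = (\<Inter>j. {z::real^'k. 0 \<le> z $ j}) \<inter> {z. (\<Sum>j\<in>UNIV. z $ j) = 1}"
      unfolding std_simplex_def by auto
    moreover have "closed {z::real^'k. (\<Sum>j\<in>UNIV. z $ j) = 1}"
      by (intro closed_Collect_eq continuous_intros continuous_on_component) 
    moreover have "\<And>j. closed {z::real^'k. 0 \<le> z $ j}"
      by (intro closed_Collect_le continuous_intros continuous_on_component)
    ultimately show ?thesis by (metis closed_INT closed_Int)
  qed
  have "bounded (std_simplex :: (real^'k) set)"
  proof -
    have "\<forall>z\<in>std_simplex. norm (z::real^'k) \<le> 1"
    proof
      fix z :: "real^'k" assume "z \<in> std_simplex"
      then have "\<And>j. 0 \<le> z$j" "(\<Sum>j\<in>UNIV. z $ j) = 1" unfolding std_simplex_def by auto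
      then show "norm z \<le> 1" using norm_le_l1_cart[of z] by simp
    qed
    then show ?thesis unfolding bounded_iff by blast
  qed
  with cl show ?thesis by (simp add: compact_eq_bounded_closed)
qed

lemma simplex_norm: "z \<in> std_simplex \<Longrightarrow> norm (z::real^'k) \<le> 1"
proof -
  assume "z \<in> std_simplex"
  then have "\<And>j. 0 \<le> z$j" "(\<Sum>j\<in>UNIV. z $ j) = 1" unfolding std_simplex_def by auto
  then show "norm z \<le> 1" using norm_le_l1_cart[of z] by simp
qed

lemma pm_integrable:
  fixes h :: "real^'k \<Rightarrow> 'b::{banach,second_countable_topology}"
  assumes p: "p \<in> prob_measures_on (std_simplex::(real^'k) set)"
    and h: "continuous_on std_simplex h"
  shows "integrable p h"
proof -
  have ps: "prob_space p" and sp: "space p = std_simplex" and st: "sets p = sets (restrict_space borel std_simplex)"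
    using p unfolding prob_measures_on_def by auto
  have "compact (h ` std_simplex)" using compact_continuous_image[OF h simplex_compact] .
  then obtain B where B: "\<And>z. z \<in> std_simplex \<Longrightarrow> norm (h z) \<le> B"
    using compact_imp_bounded bounded_iff by (metis imageI)
  have "(borel_measurable p :: (real^'k \<Rightarrow> 'b) set) = borel_measurable (restrict_space borel std_simplex)"
    by (rule measurable_cong_sets[OF st refl])
  then have m: "h \<in> borel_measurable p"
    using borel_measurable_continuous_on_restrict[OF h] by simp
  show ?thesis
    apply (rule finite_measure.integrable_const_bound[where B=B])
    using ps prob_space_def apply blast
    using B sp apply (intro AE_I2) apply simp
    using m .
qed


definition rr :: "real^'k \<Rightarrow> real^'k \<Rightarrow> real^'k" where
  "rr x x' = (\<chi> j. if x'$j = 0 then 1 else min (x$j) (x'$j) / x'$j)"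
definition dd :: "real^'k \<Rightarrow> real^'k \<Rightarrow> real^'k" where
  "dd x x' = (\<chi> j. x$j - min (x$j) (x'$j))"
definition ss :: "real^'k \<Rightarrow> real^'k \<Rightarrow> real" where
  "ss x x' = (\<Sum>j\<in>UNIV. dd x x' $ j)"
definition ww :: "real^'k \<Rightarrow> real^'k \<Rightarrow> real^'k" where
  "ww x x' = (if ss x x' = 0 then x else (1 / ss x x') *\<^sub>R dd x x')"
definition tt :: "real^'k \<Rightarrow> real^'k \<Rightarrow> real^'k \<Rightarrow> real" where
  "tt x x' X = (\<Sum>j\<in>UNIV. X$j * (1 - rr x x' $ j))"
definition AA :: "real^'k \<Rightarrow> real^'k \<Rightarrow> real^'k \<Rightarrow> real^'k" where
  "AA x x' X = X * rr x x' + tt x x' X *\<^sub>R ww x x'"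

lemma simplex_D: "z \<in> std_simplex \<Longrightarrow> 0 \<le> z $ j" "z \<in> std_simplex \<Longrightarrow> (\<Sum>j\<in>UNIV. z $ j) = 1"
  unfolding std_simplex_def by auto

lemma rr_props:
  assumes "x \<in> std_simplex" "x' \<in> std_simplex"
  shows "0 \<le> rr x x' $ j" "rr x x' $ j \<le> 1" "x' $ j * rr x x' $ j = min (x$j) (x'$j)"
proof -
  have a: "0 \<le> x$j" "0 \<le> x'$j" using simplex_D assms by auto
  show "0 \<le> rr x x' $ j" using a by (simp add: rr_def)
  show "rr x x' $ j \<le> 1"
  proof (cases "x'$j = 0")
    case True then show ?thesis by (simp add: rr_def)
  next
    case False
    then have "x'$j > 0" using a by linarith
    moreover have "min (x$j) (x'$j) \<le> x'$j" by simp
    ultimately show ?thesis using False by (simp add: rr_def)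
  qed
  show "x' $ j * rr x x' $ j = min (x$j) (x'$j)"
  proof (cases "x'$j = 0")
    case True then show ?thesis using a by (simp add: rr_def min_def)
  next
    case False then show ?thesis by (simp add: rr_def)
  qed
qed

lemma dd_nonneg: "0 \<le> dd x x' $ j" by (simp add: dd_def)

lemma ss_nonneg: "0 \<le> ss x x'" unfolding ss_def by (intro sum_nonneg) (simp add: dd_def)

lemma ss_zero: "ss x x' = 0 \<Longrightarrow> dd x x' = 0"
proof -
  assume "ss x x' = 0"
  moreover have "\<forall>j\<in>UNIV. 0 \<le> dd x x' $ j" using dd_nonneg by blast
  ultimately have "\<forall>j\<in>UNIV. dd x x' $ j = 0" unfolding ss_def
    using sum_nonneg_eq_0_iff[of UNIV "\<lambda>j. dd x x' $ j"] by (simp add: dd_nonneg)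
  then show ?thesis by (simp add: vec_eq_iff)
qed

lemma ss_dd: "ss x x' *\<^sub>R ww x x' = dd x x'"
  by (cases "ss x x' = 0") (simp_all add: ww_def ss_zero)

lemma ww_in: assumes "x \<in> std_simplex" shows "ww x x' \<in> std_simplex"
proof (cases "ss x x' = 0")
  case True then show ?thesis using assms by (simp add: ww_def)
next
  case False
  then have pos: "ss x x' > 0" using ss_nonneg[of x x'] by linarith
  have "(\<Sum>j\<in>UNIV. ww x x' $ j) = (\<Sum>j\<in>UNIV. dd x x' $ j) / ss x x'"
    using False by (simp add: ww_def sum_divide_distrib)
  also have "\<dots> = 1" using False by (simp add: ss_def)
  moreover have "\<forall>j. 0 \<le> ww x x' $ j" using False pos by (simp add: ww_def dd_def)
  ultimately show ?thesis unfolding std_simplex_def by simp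
qed

lemma tt_x': assumes "x \<in> std_simplex" "x' \<in> std_simplex" shows "tt x x' x' = ss x x'"
proof -
  have "tt x x' x' = (\<Sum>j\<in>UNIV. x'$j - min (x$j) (x'$j))"
    unfolding tt_def using rr_props[OF assms] by (simp add: algebra_simps)
  also have "\<dots> = 1 - (\<Sum>j\<in>UNIV. min (x$j) (x'$j))"
    using simplex_D(2)[OF assms(2)] by (simp add: sum_subtractf)
  also have "\<dots> = (\<Sum>j\<in>UNIV. x$j) - (\<Sum>j\<in>UNIV. min (x$j) (x'$j))"
    using simplex_D(2)[OF assms(1)] by simp
  also have "\<dots> = ss x x'" by (simp add: ss_def dd_def sum_subtractf)
  finally show ?thesis .
qed

lemma AA_x': assumes "x \<in> std_simplex" "x' \<in> std_simplex" shows "AA x x' x' = x"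
proof -
  have "AA x x' x' = x' * rr x x' + dd x x'"
    unfolding AA_def tt_x'[OF assms] ss_dd ..
  also have "\<dots> = x" using rr_props(3)[OF assms] by (simp add: vec_eq_iff dd_def)
  finally show ?thesis .
qed

lemma tt_nonneg: assumes "x \<in> std_simplex" "x' \<in> std_simplex" "X \<in> std_simplex"
  shows "0 \<le> tt x x' X"
  unfolding tt_def using rr_props[OF assms(1,2)] simplex_D(1)[OF assms(3)]
  by (intro sum_nonneg) simp

lemma AA_in: assumes "x \<in> std_simplex" "x' \<in> std_simplex" "X \<in> std_simplex"
  shows "AA x x' X \<in> std_simplex"
proof -
  have w: "ww x x' \<in> std_simplex" using ww_in assms by blast
  have c: "\<And>j. AA x x' X $ j = X$j * rr x x' $ j + tt x x' X * ww x x' $ j"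
    by (simp add: AA_def)
  have "(\<Sum>j\<in>UNIV. AA x x' X $ j) = (\<Sum>j\<in>UNIV. X$j * rr x x' $ j) + (\<Sum>j\<in>UNIV. tt x x' X * ww x x' $ j)"
    unfolding c by (rule sum.distrib)
  also have "(\<Sum>j\<in>UNIV. tt x x' X * ww x x' $ j) = tt x x' X * (\<Sum>j\<in>UNIV. ww x x' $ j)"
    by (rule sum_distrib_left[symmetric])
  also have "\<dots> = tt x x' X" using simplex_D(2)[OF w] by simp
  also have "tt x x' X = (\<Sum>j\<in>UNIV. X$j) - (\<Sum>j\<in>UNIV. X$j * rr x x' $ j)"
    unfolding tt_def right_diff_distrib mult_1_right by (rule sum_subtractf)
  finally have "(\<Sum>j\<in>UNIV. AA x x' X $ j) = (\<Sum>j\<in>UNIV. X$j)" by simp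
  then have "(\<Sum>j\<in>UNIV. AA x x' X $ j) = 1" using simplex_D(2)[OF assms(3)] by simp
  moreover have "\<forall>j. 0 \<le> AA x x' X $ j"
  proof
    fix j
    show "0 \<le> AA x x' X $ j" unfolding c
      using rr_props(1)[OF assms(1,2), of j] simplex_D(1)[OF assms(3), of j] simplex_D(1)[OF w, of j] tt_nonneg[OF assms]
      by (intro add_nonneg_nonneg mult_nonneg_nonneg)
  qed
  ultimately show ?thesis unfolding std_simplex_def by simp
qed

lemma tt_inner: "tt x x' X = inner X (1 - rr x x')"
  by (simp add: tt_def inner_vec_def)

lemma tt_linear: "bounded_linear (tt x x')"
  unfolding tt_inner[abs_def] by (rule bounded_linear_inner_left)

lemma AA_linear: fixes x x' :: "real^'k" shows "bounded_linear (AA x x')"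
proof -
  have "linear (\<lambda>X::real^'k. X * rr x x')"
    by (intro linearI) (simp_all add: vec_eq_iff algebra_simps)
  then have l1: "bounded_linear (\<lambda>X::real^'k. X * rr x x')"
    by (simp add: linear_conv_bounded_linear)
  have l2: "bounded_linear (\<lambda>X. tt x x' X *\<^sub>R ww x x')"
    using bounded_linear_compose[OF bounded_linear_scaleR_left tt_linear] .
  show ?thesis unfolding AA_def[abs_def] using bounded_linear_add[OF l1 l2] .
qed

lemma AA_dist: assumes "x \<in> std_simplex" "x' \<in> std_simplex" "X \<in> std_simplex"
  shows "dist (AA x x' X) X \<le> 2 * tt x x' X"
proof -
  have w: "norm (ww x x') \<le> 1" using ww_in simplex_norm assms by blast
  have e: "AA x x' X - X = tt x x' X *\<^sub>R ww x x' - (\<chi> j. X$j * (1 - rr x x' $ j))"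
    by (simp add: AA_def vec_eq_iff algebra_simps)
  have "norm (\<chi> j. X$j * (1 - rr x x' $ j)) \<le> (\<Sum>j\<in>UNIV. \<bar>X$j * (1 - rr x x' $ j)\<bar>)"
    using norm_le_l1_cart[of "\<chi> j. X$j * (1 - rr x x' $ j)"] by simp
  also have "\<dots> = tt x x' X" unfolding tt_def
    using rr_props[OF assms(1,2)] simplex_D(1)[OF assms(3)] by (intro sum.cong) auto
  finally have n1: "norm (\<chi> j. X$j * (1 - rr x x' $ j)) \<le> tt x x' X" .
  have "norm (tt x x' X *\<^sub>R ww x x') \<le> tt x x' X"
    using w tt_nonneg[OF assms] by (simp add: mult_left_le)
  then show ?thesis unfolding dist_norm e using n1 norm_triangle_ineq4[of "tt x x' X *\<^sub>R ww x x'" "\<chi> j. X$j * (1 - rr x x' $ j)"]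
    by linarith
qed

lemma ss_bound: assumes "x \<in> std_simplex" "x' \<in> std_simplex"
  shows "ss x x' \<le> real CARD('k) * dist x (x'::real^'k)"
proof -
  have "ss x x' \<le> (\<Sum>j\<in>(UNIV::'k set). dist x x')" unfolding ss_def
  proof (intro sum_mono)
    fix j
    have "\<bar>(x - x')$j\<bar> \<le> norm (x - x')" by (rule component_le_norm_cart)
    then show "dd x x' $ j \<le> dist x x'" by (simp add: dd_def dist_norm)
  qed
  then show ?thesis by simp
qed


lemma dist_pair_le: "dist (a, b) (c, d) \<le> dist a c + dist b d"
  using sqrt_sum_squares_le_sum_abs[of "dist a c" "dist b d"] by (simp add: dist_Pair_Pair)

lemma key:
  fixes f :: "(real ^ 'm) \<times> (real ^ 'n) \<Rightarrow> real"
  assumes fc: "continuous_on (std_simplex \<times> std_simplex) f"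
    and L: "0 \<le> L"
    and bnd: "\<forall>a\<in>std_simplex \<times> std_simplex. \<forall>b\<in>std_simplex \<times> std_simplex. \<bar>f a - f b\<bar> \<le> e + L * dist a b"
    and x: "x \<in> std_simplex" and x': "x' \<in> std_simplex"
    and y: "y \<in> std_simplex" and y': "y' \<in> std_simplex"
    and p': "p' \<in> prob_measures_on (std_simplex :: (real^'m) set)" and mean: "(\<integral>X. X \<partial>p') = x'"
  shows "\<exists>p\<in>prob_measures_on (std_simplex :: (real^'m) set). (\<integral>X. X \<partial>p) = x \<and>
     (\<integral>X. f (X, y') \<partial>p') - e - L * (dist y y' + 2 * real CARD('m) * dist x x') \<le> (\<integral>X. f (X, y) \<partial>p)"
proof -
  define S where "S = (std_simplex :: (real^'m) set)"
  define M where "M = restrict_space (borel :: (real^'m) measure) S"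
  define A where "A = AA x x'"
  have ps: "prob_space p'" and sp: "space p' = S" and st: "sets p' = sets M"
    using p' unfolding prob_measures_on_def S_def M_def by auto
  have spM: "space M = S" by (simp add: M_def space_restrict_space)
  have AS: "\<And>X. X \<in> S \<Longrightarrow> A X \<in> S" unfolding A_def S_def using AA_in x x' by blast
  have cA: "continuous_on S A" unfolding A_def by (rule linear_continuous_on[OF AA_linear])
  have "A \<in> M \<rightarrow>\<^sub>M restrict_space borel S"
    apply (rule measurable_restrict_space2)
    using AS spM apply blast
    unfolding M_def by (rule borel_measurable_continuous_on_restrict[OF cA])
  then have mA: "A \<in> p' \<rightarrow>\<^sub>M M" unfolding M_def[symmetric]
    using measurable_cong_sets[OF st refl, of M] by simp
  define p where "p = distr p' M A"
  have "space p = S" unfolding p_def using spM by simp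
  moreover have "sets p = sets (restrict_space borel S)" unfolding p_def M_def by simp
  moreover have "prob_space p" unfolding p_def using prob_space.prob_space_distr[OF ps mA] .
  ultimately have pP: "p \<in> prob_measures_on S"
    unfolding prob_measures_on_def by simp
  have idm: "(\<lambda>X. X) \<in> borel_measurable M" unfolding M_def
    by (rule borel_measurable_continuous_on_restrict[OF continuous_on_id])
  have intX: "integrable p' (\<lambda>X. X)"
    using pm_integrable[OF p'[folded S_def, unfolded S_def]] continuous_on_id by blast
  have "(\<integral>X. X \<partial>p) = (\<integral>X. A X \<partial>p')" unfolding p_def by (rule integral_distr[OF mA idm])
  also have "\<dots> = A (\<integral>X. X \<partial>p')" unfolding A_def
    by (rule integral_bounded_linear[OF AA_linear intX])
  also have "\<dots> = x" unfolding mean A_def using AA_x'[OF x x'] .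
  finally have pmean: "(\<integral>X. X \<partial>p) = x" .
  have cfy: "continuous_on S (\<lambda>X. f (X, z))" if "z \<in> std_simplex" for z
    apply (rule continuous_on_compose2[OF fc])
    using that by (auto simp: S_def intro!: continuous_intros)
  have "(\<lambda>X. f (X, y)) \<in> borel_measurable M" unfolding M_def
    by (rule borel_measurable_continuous_on_restrict[OF cfy[OF y]])
  then have pf: "(\<integral>X. f (X, y) \<partial>p) = (\<integral>X. f (A X, y) \<partial>p')"
    unfolding p_def by (rule integral_distr[OF mA])
  have cfA: "continuous_on S (\<lambda>X. f (A X, y))"
    apply (rule continuous_on_compose2[OF fc])
    using y AS cA by (auto simp: S_def intro!: continuous_intros)
  define c where "c = e + L * dist y y'"
  have ctt: "continuous_on S (tt x x')" by (rule linear_continuous_on[OF tt_linear])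
  have i1: "integrable p' (\<lambda>X. f (X, y'))"
    using pm_integrable[OF p' cfy[OF y', unfolded S_def]] .
  have i2: "integrable p' (\<lambda>X. (2 * L) * tt x x' X)"
    using pm_integrable[OF p'] ctt unfolding S_def by (auto intro!: continuous_intros)
  have i2': "integrable p' (tt x x')"
    using pm_integrable[OF p'] ctt unfolding S_def by auto
  have i3: "integrable p' (\<lambda>X. f (A X, y))"
    using pm_integrable[OF p' cfA[unfolded S_def]] .
  have ic: "integrable p' (\<lambda>X. c)"
    using pm_integrable[OF p', of "\<lambda>X. c"] by simp
  have i4: "integrable p' (\<lambda>X. f (X, y') - c)" using i1 ic by simp
  have pw: "f (X, y') - c - (2 * L) * tt x x' X \<le> f (A X, y)" if "X \<in> space p'" for X
  proof -
    have X: "X \<in> S" using that sp by simp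
    have "\<bar>f (A X, y) - f (X, y')\<bar> \<le> e + L * dist (A X, y) (X, y')"
      using bnd AS[OF X] X y y' unfolding S_def by blast
    also have "\<dots> \<le> e + L * (2 * tt x x' X + dist y y')"
    proof -
      have "dist (A X, y) (X, y') \<le> dist (A X) X + dist y y'" by (rule dist_pair_le)
      also have "\<dots> \<le> 2 * tt x x' X + dist y y'"
        using AA_dist[OF x x' X[unfolded S_def]] unfolding A_def by simp
      finally show ?thesis using L by (simp add: mult_left_mono)
    qed
    finally show ?thesis unfolding c_def by (simp add: algebra_simps)
  qed
  have "(\<integral>X. f (X, y') - c - (2 * L) * tt x x' X \<partial>p') \<le> (\<integral>X. f (A X, y) \<partial>p')"
    by (rule integral_mono[OF _ i3 pw]) (use i4 i2 in simp)
  moreover have "(\<integral>X. f (X, y') - c - (2 * L) * tt x x' X \<partial>p') =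
      (\<integral>X. f (X, y') \<partial>p') - c - (2 * L) * tt x x' x'"
  proof -
    have "(\<integral>X. f (X, y') - c - (2 * L) * tt x x' X \<partial>p') =
        (\<integral>X. f (X, y') - c \<partial>p') - (\<integral>X. (2 * L) * tt x x' X \<partial>p')"
      by (rule Bochner_Integration.integral_diff[OF i4 i2])
    also have "(\<integral>X. f (X, y') - c \<partial>p') = (\<integral>X. f (X, y') \<partial>p') - (\<integral>X. c \<partial>p')"
      by (rule Bochner_Integration.integral_diff[OF i1 ic])
    also have "(\<integral>X. c \<partial>p') = c"
      using prob_space.prob_space[OF ps] by simp
    also have "(\<integral>X. (2 * L) * tt x x' X \<partial>p') = (2 * L) * (\<integral>X. tt x x' X \<partial>p')"
      using i2' by simp
    also have "(\<integral>X. tt x x' X \<partial>p') = tt x x' x'"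
      using integral_bounded_linear[OF tt_linear intX] mean by simp
    finally show ?thesis .
  qed
  moreover have "tt x x' x' \<le> real CARD('m) * dist x x'"
    using tt_x'[OF x x'] ss_bound[OF x x'] by simp
  then have "(2 * L) * tt x x' x' \<le> (2 * L) * (real CARD('m) * dist x x')"
    using L by (intro mult_left_mono) auto
  ultimately have "(\<integral>X. f (X, y') \<partial>p') - c - L * (2 * real CARD('m) * dist x x') \<le> (\<integral>X. f (X, y) \<partial>p)"
    unfolding pf by (simp add: algebra_simps)
  then show ?thesis using pP pmean unfolding S_def c_def by (auto simp: algebra_simps)
qed


lemma uc_bound:
  fixes f :: "'a::metric_space \<Rightarrow> real"
  assumes uc: "uniformly_continuous_on T f" and M: "\<And>a. a \<in> T \<Longrightarrow> \<bar>f a\<bar> \<le> B"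
    and e: "e > 0"
  shows "\<exists>L\<ge>0. \<forall>a\<in>T. \<forall>b\<in>T. \<bar>f a - f b\<bar> \<le> e + L * dist a b"
proof -
  obtain d where d: "d > 0" and hd: "\<And>a b. a \<in> T \<Longrightarrow> b \<in> T \<Longrightarrow> dist a b < d \<Longrightarrow> dist (f a) (f b) < e"
    using uc e unfolding uniformly_continuous_on_def by metis
  define L where "L = 2 * \<bar>B\<bar> / d"
  have L0: "L \<ge> 0" using d by (simp add: L_def)
  have "\<bar>f a - f b\<bar> \<le> e + L * dist a b" if a: "a \<in> T" and b: "b \<in> T" for a b
  proof (cases "dist a b < d")
    case True
    then have "\<bar>f a - f b\<bar> < e" using hd[OF a b] by (simp add: dist_real_def)
    moreover have "0 \<le> L * dist a b" using L0 by simp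
    ultimately show ?thesis by linarith
  next
    case False
    have "2 * \<bar>B\<bar> = L * d" using d by (simp add: L_def)
    also have "L * d \<le> L * dist a b" using False L0 by (intro mult_left_mono) auto
    finally have "2 * \<bar>B\<bar> \<le> L * dist a b" .
    moreover have "\<bar>f a - f b\<bar> \<le> 2 * \<bar>B\<bar>" using M[OF a] M[OF b] by linarith
    ultimately show ?thesis using e by linarith
  qed
  then show ?thesis using L0 by blast
qed

theorem mainTheorem9:
  fixes f :: "(real ^ 'm) \<times> (real ^ 'n) \<Rightarrow> real"
  assumes "continuous_on (std_simplex \<times> std_simplex) f"
  shows "continuous_on (std_simplex \<times> std_simplex) (concav_env f)"
proof -
  define T where "T = (std_simplex \<times> std_simplex :: ((real^'m) \<times> (real^'n)) set)"
  define V where "V = (\<lambda>x (y::real^'n). {(\<integral>X. f (X, y) \<partial>p) | p.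
       p \<in> prob_measures_on (std_simplex :: (real^'m) set) \<and> (\<integral>X. X \<partial>p) = x})"
  have g: "concav_env f (x, y) = Sup (V x y)" for x y unfolding concav_env_def V_def by simp
  have cT: "compact T" unfolding T_def by (intro compact_Times simplex_compact)
  have fc: "continuous_on T f" using assms unfolding T_def .
  have "compact (f ` T)" using compact_continuous_image[OF fc cT] .
  then obtain B where B: "\<And>a. a \<in> T \<Longrightarrow> \<bar>f a\<bar> \<le> B"
    using compact_imp_bounded bounded_iff by (metis imageI real_norm_def)
  have uc: "uniformly_continuous_on T f" using compact_uniformly_continuous[OF fc cT] .
  have ne: "V x y \<noteq> {}" if x: "x \<in> std_simplex" for x y
  proof -
    define q where "q = return (restrict_space (borel :: (real^'m) measure) std_simplex) x"
    have sp: "space (restrict_space (borel :: (real^'m) measure) std_simplex) = std_simplex"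
      by (simp add: space_restrict_space)
    have "q \<in> prob_measures_on std_simplex"
      unfolding prob_measures_on_def q_def using x sp by (auto intro!: prob_space_return)
    moreover have "(\<integral>X. X \<partial>q) = x" unfolding q_def
      by (rule integral_return) (use x sp in \<open>auto intro: borel_measurable_continuous_on_restrict continuous_on_id\<close>)
    ultimately show ?thesis unfolding V_def by blast
  qed
  have bdd: "bdd_above (V x y)" if y: "y \<in> std_simplex" for x y
  proof -
    have "v \<le> B" if "v \<in> V x y" for v
    proof -
      obtain p where p: "p \<in> prob_measures_on std_simplex" and v: "v = (\<integral>X. f (X, y) \<partial>p)"
        using \<open>v \<in> V x y\<close> unfolding V_def by blast
      have sp: "space p = std_simplex" and ps: "prob_space p" using p unfolding prob_measures_on_def by auto
      have cfy: "continuous_on std_simplex (\<lambda>X. f (X, y))"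
        apply (rule continuous_on_compose2[OF fc])
        using y by (auto simp: T_def intro!: continuous_intros)
      have "(\<integral>X. f (X, y) \<partial>p) \<le> (\<integral>X. B \<partial>p)"
        apply (rule integral_mono[OF pm_integrable[OF p cfy] pm_integrable[OF p]])
      proof -
        fix X assume "X \<in> space p"
        then have "(X, y) \<in> T" using y sp by (simp add: T_def)
        then show "f (X, y) \<le> B" using B abs_le_D1 by blast
      qed (rule continuous_on_const)
      also have "\<dots> = B" using prob_space.prob_space[OF ps] by simp
      finally show ?thesis using v by simp
    qed
    then show ?thesis unfolding bdd_above_def by blast
  qed
  have cmp: "Sup (V x' y') \<le> Sup (V x y) + e + L * (dist y y' + 2 * real CARD('m) * dist x x')"
    if L: "0 \<le> L" and bnd: "\<forall>a\<in>T. \<forall>b\<in>T. \<bar>f a - f b\<bar> \<le> e + L * dist a b"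
      and x: "x \<in> std_simplex" and x': "x' \<in> std_simplex"
      and y: "y \<in> std_simplex" and y': "y' \<in> std_simplex" for x x' y y' e L
  proof (rule cSup_least[OF ne[OF x']])
    fix v assume "v \<in> V x' y'"
    then obtain p' where p': "p' \<in> prob_measures_on std_simplex" and m: "(\<integral>X. X \<partial>p') = x'"
      and v: "v = (\<integral>X. f (X, y') \<partial>p')" unfolding V_def by blast
    obtain p where p: "p \<in> prob_measures_on std_simplex" "(\<integral>X. X \<partial>p) = x"
      and le: "(\<integral>X. f (X, y') \<partial>p') - e - L * (dist y y' + 2 * real CARD('m) * dist x x') \<le> (\<integral>X. f (X, y) \<partial>p)"
      using key[OF assms L bnd[unfolded T_def] x x' y y' p' m] by blast
    have "(\<integral>X. f (X, y) \<partial>p) \<in> V x y" unfolding V_def using p by blast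
    then have "(\<integral>X. f (X, y) \<partial>p) \<le> Sup (V x y)" by (rule cSup_upper[OF _ bdd[OF y]])
    then show "v \<le> Sup (V x y) + e + L * (dist y y' + 2 * real CARD('m) * dist x x')"
      using le v by linarith
  qed
  show ?thesis
    unfolding continuous_on_iff
  proof (intro ballI allI impI)
    fix z :: "(real^'m) \<times> (real^'n)" and \<epsilon> :: real assume z: "z \<in> std_simplex \<times> std_simplex" and \<epsilon>: "\<epsilon> > 0"
    obtain L where L: "L \<ge> 0" and bnd: "\<forall>a\<in>T. \<forall>b\<in>T. \<bar>f a - f b\<bar> \<le> \<epsilon> / 3 + L * dist a b"
      using uc_bound[OF uc B, of "\<epsilon> / 3"] \<epsilon> by auto
    define K where "K = L * (1 + 2 * real CARD('m)) + 1"
    have "0 \<le> L * (1 + 2 * real CARD('m))" using L by simp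
    then have K: "K > 0" by (simp add: K_def)
    define \<delta> where "\<delta> = \<epsilon> / (3 * K)"
    have \<delta>: "\<delta> > 0" using K \<epsilon> by (simp add: \<delta>_def)
    show "\<exists>\<delta>>0. \<forall>z'\<in>std_simplex \<times> std_simplex. dist z' z < \<delta> \<longrightarrow> dist (concav_env f z') (concav_env f z) < \<epsilon>"
    proof (intro exI[of _ \<delta>] conjI ballI impI \<delta>)
      fix z' :: "(real^'m) \<times> (real^'n)" assume z': "z' \<in> std_simplex \<times> std_simplex" and dz: "dist z' z < \<delta>"
      obtain x y where zz: "z = (x, y)" by (cases z)
      obtain x' y' where zz': "z' = (x', y')" by (cases z')
      have x: "x \<in> std_simplex" and y: "y \<in> std_simplex" using z zz by auto
      have x': "x' \<in> std_simplex" and y': "y' \<in> std_simplex" using z' zz' by auto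
      have dx: "dist x x' \<le> dist z' z" "dist x' x \<le> dist z' z"
        using dist_fst_le[of z z'] dist_fst_le[of z' z] zz zz' by (simp_all add: dist_commute)
      have dy: "dist y y' \<le> dist z' z" "dist y' y \<le> dist z' z"
        using dist_snd_le[of z z'] dist_snd_le[of z' z] zz zz' by (simp_all add: dist_commute)
      have E: "L * (dist y y' + 2 * real CARD('m) * dist x x') \<le> K * dist z' z"
      proof -
        have "dist y y' + 2 * real CARD('m) * dist x x' \<le> dist z' z + 2 * real CARD('m) * dist z' z"
          using dx dy by (intro add_mono mult_left_mono) auto
        then have "L * (dist y y' + 2 * real CARD('m) * dist x x') \<le> L * ((1 + 2 * real CARD('m)) * dist z' z)"
          using L by (intro mult_left_mono) (auto simp: algebra_simps)
        also have "\<dots> \<le> K * dist z' z" unfolding K_def by (simp add: algebra_simps)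
        finally show ?thesis .
      qed
      have E': "L * (dist y' y + 2 * real CARD('m) * dist x' x) \<le> K * dist z' z"
        using E by (simp add: dist_commute)
      have Kd: "K * dist z' z < \<epsilon> / 3"
      proof -
        have "K * dist z' z < K * \<delta>" using K dz by simp
        also have "K * \<delta> = \<epsilon> / 3" using K by (simp add: \<delta>_def)
        finally show ?thesis .
      qed
      have c1: "Sup (V x' y') \<le> Sup (V x y) + \<epsilon> / 3 + L * (dist y y' + 2 * real CARD('m) * dist x x')"
        by (rule cmp[OF L bnd x x' y y'])
      have c2: "Sup (V x y) \<le> Sup (V x' y') + \<epsilon> / 3 + L * (dist y' y + 2 * real CARD('m) * dist x' x)"
        by (rule cmp[OF L bnd x' x y' y])
      show "dist (concav_env f z') (concav_env f z) < \<epsilon>"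
        unfolding zz zz' g dist_real_def using c1 c2 E E' Kd by linarith
    qed
  qed
qed

end
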